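(* Let $\kappa$ be a regular cardinal and $\lambda\le\kappa$. If $(T,L)$ is a good labelled $(\kappa,\lambda)$-tree, then $(T,L)$ is a $(\kappa,\lambda)$-Borel$^*$-code.
   Context: Basic $\kappa$-open sets: $N_\eta=\{\zeta\in\kappa^\kappa\mid\eta\subseteq\zeta\}$ for $\eta:X\to\kappa$, $X\subseteq\kappa$, $|X|<\kappa$, and $\emptyset$; in $\kappa^\kappa\times\kappa^\kappa$ they are products $N_\eta\times N_\xi$. A set is $\kappa$-open if it is a union of at most $\kappa$ basic $\kappa$-open sets, $\kappa$-closed if its complement is $\kappa$-open; $\kappa$-Borel sets form the smallest class containing the basic $\kappa$-open sets closed under complements and unions and intersections of at most $\kappa$ sets. A good labelled $(\kappa,\lambda)$-tree is a pair $(T,L)$ where $T$ is a (rooted) tree without branches of length $\kappa$, every element of $T$ has at most $\kappa$ immediate successors, $|T|\le\lambda$, every increasing sequence in $T$ has a supremum in $T$, $L(t)\in\{\bigcup,\bigcap\}$ for every non-leaf $t$, and $L(t)$ is a basic $\kappa$-open set for every leaf $t$. Borel$^*$-game $GB(\xi,(T,L))$ for $\xi\in\kappa^\kappa$: the play starts at the root; at a non-leaf node $t$, player II chooses an immediate successor if $L(t)=\bigcup$ and player I chooses one if $L(t)=\bigcap$; at limit stages the play moves to the supremum of the nodes chosen so far; the play ends at a leaf $t$ and II wins iff $\xi\in L(t)$. $(T,L)$ is a $(\kappa,\lambda)$-Borel$^*$-code if it is a good labelled $(\kappa,\lambda)$-tree and there is a function $\pi$ such that: (i) $\mathrm{dom}(\pi)$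 is a $\kappa$-closed subset of $\kappa^\kappa$ and each $\pi(\eta)$ is a strategy of II in the Borel$^*$-game on $(T,L)$; (ii) for every $\xi\in\kappa^\kappa$, if II has a winning strategy in $GB(\xi,(T,L))$ then $\pi(\eta)$ is a winning strategy of II in $GB(\xi,(T,L))$ for some $\eta\in\mathrm{dom}(\pi)$; (iii) the set $\{(\xi,\eta)\mid\eta\in\mathrm{dom}(\pi)$ and $\pi(\eta)$ is a winning strategy of II in $GB(\xi,(T,L))\}$ is $\kappa$-Borel. *)

theory Defs
  imports Main
begin

text \<open>The cardinal kappa is represented by a cardinal well-order r on a type 'k
(Field r = UNIV); elements of kappa^kappa are functions 'k => 'k.
Partial functions eta : X -> kappa with X a subset of kappa are maps 'k => 'k option.\<close>

definition Nbhd :: "('k \<Rightarrow> 'k option) \<Rightarrow> ('k \<Rightarrow> 'k) set" where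
  "Nbhd \<eta> = {\<zeta>. \<forall>x\<in>dom \<eta>. \<eta> x = Some (\<zeta> x)}"

definition basic_open :: "'k rel \<Rightarrow> ('k \<Rightarrow> 'k) set set" where
  "basic_open r = {Nbhd \<eta> | \<eta>. (card_of (dom \<eta>), r) \<in> ordLess} \<union> {{}}"

definition basic_open2 :: "'k rel \<Rightarrow> (('k \<Rightarrow> 'k) \<times> ('k \<Rightarrow> 'k)) set set" where
  "basic_open2 r = {A \<times> B | A B. A \<in> basic_open r \<and> B \<in> basic_open r}"

definition kopen :: "'k rel \<Rightarrow> 'a set set \<Rightarrow> 'a set \<Rightarrow> bool" where
  "kopen r B U \<longleftrightarrow> (\<exists>F. F \<subseteq> B \<and> (card_of F, r) \<in> ordLeq \<and> U = \<Union>F)"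

definition kclosed :: "'k rel \<Rightarrow> 'a set set \<Rightarrow> 'a set \<Rightarrow> bool" where
  "kclosed r B C \<longleftrightarrow> kopen r B (- C)"

inductive_set kborel :: "'k rel \<Rightarrow> 'a set set \<Rightarrow> 'a set set" for r B where
  basic: "U \<in> B \<Longrightarrow> U \<in> kborel r B"
| compl: "U \<in> kborel r B \<Longrightarrow> - U \<in> kborel r B"
| union: "(\<forall>U\<in>F. U \<in> kborel r B) \<Longrightarrow> (card_of F, r) \<in> ordLeq \<Longrightarrow> \<Union>F \<in> kborel r B"
| inter: "(\<forall>U\<in>F. U \<in> kborel r B) \<Longrightarrow> (card_of F, r) \<in> ordLeq \<Longrightarrow> \<Inter>F \<in> kborel r B"

definition tree :: "'n set \<Rightarrow> ('n \<Rightarrow> 'n \<Rightarrow> bool) \<Rightarrow> bool" where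
  "tree T lt \<longleftrightarrow>
     (\<forall>x\<in>T. \<not> lt x x) \<and>
     (\<forall>x\<in>T. \<forall>y\<in>T. \<forall>z\<in>T. lt x y \<and> lt y z \<longrightarrow> lt x z) \<and>
     (\<forall>t\<in>T. \<forall>x\<in>T. \<forall>y\<in>T. lt x t \<and> lt y t \<longrightarrow> lt x y \<or> x = y \<or> lt y x) \<and>
     (\<forall>t\<in>T. \<forall>S. S \<subseteq> {s\<in>T. lt s t} \<and> S \<noteq> {} \<longrightarrow> (\<exists>m\<in>S. \<forall>s\<in>S. \<not> lt s m))"

definition rooted :: "'n set \<Rightarrow> ('n \<Rightarrow> 'n \<Rightarrow> bool) \<Rightarrow> bool" where
  "rooted T lt \<longleftrightarrow> (\<exists>r0\<in>T. \<forall>t\<in>T. t = r0 \<or> lt r0 t)"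

definition chain_in :: "'n set \<Rightarrow> ('n \<Rightarrow> 'n \<Rightarrow> bool) \<Rightarrow> 'n set \<Rightarrow> bool" where
  "chain_in T lt C \<longleftrightarrow> C \<subseteq> T \<and> (\<forall>x\<in>C. \<forall>y\<in>C. lt x y \<or> x = y \<or> lt y x)"

text \<open>A branch (of the tree) is a downward closed chain; its length is the order type
of the induced (reflexive) order.\<close>
definition branch :: "'n set \<Rightarrow> ('n \<Rightarrow> 'n \<Rightarrow> bool) \<Rightarrow> 'n set \<Rightarrow> bool" where
  "branch T lt B \<longleftrightarrow> chain_in T lt B \<and> (\<forall>b\<in>B. \<forall>s\<in>T. lt s b \<longrightarrow> s \<in> B)"

definition induced_order :: "('n \<Rightarrow> 'n \<Rightarrow> bool) \<Rightarrow> 'n set \<Rightarrow> 'n rel" where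
  "induced_order lt B = {(x, y). x \<in> B \<and> y \<in> B \<and> (lt x y \<or> x = y)}"

definition imm_succ :: "'n set \<Rightarrow> ('n \<Rightarrow> 'n \<Rightarrow> bool) \<Rightarrow> 'n \<Rightarrow> 'n set" where
  "imm_succ T lt t = {s\<in>T. lt t s \<and> \<not> (\<exists>u\<in>T. lt t u \<and> lt u s)}"

definition leaf :: "'n set \<Rightarrow> ('n \<Rightarrow> 'n \<Rightarrow> bool) \<Rightarrow> 'n \<Rightarrow> bool" where
  "leaf T lt t \<longleftrightarrow> t \<in> T \<and> imm_succ T lt t = {}"

definition is_sup :: "'n set \<Rightarrow> ('n \<Rightarrow> 'n \<Rightarrow> bool) \<Rightarrow> 'n set \<Rightarrow> 'n \<Rightarrow> bool" where
  "is_sup T lt C s \<longleftrightarrow> s \<in> T \<and> (\<forall>c\<in>C. lt c s \<or> c = s) \<and>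
     (\<forall>u\<in>T. (\<forall>c\<in>C. lt c u \<or> c = u) \<longrightarrow> lt s u \<or> s = u)"

datatype 'a label = Cup | Cap | Leaf "'a set"

definition good_labelled_tree ::
  "'k rel \<Rightarrow> 'l rel \<Rightarrow> 'n set \<Rightarrow> ('n \<Rightarrow> 'n \<Rightarrow> bool) \<Rightarrow> ('n \<Rightarrow> ('k \<Rightarrow> 'k) label) \<Rightarrow> bool" where
  "good_labelled_tree r l T lt L \<longleftrightarrow>
     tree T lt \<and> rooted T lt \<and>
     \<not> (\<exists>B. branch T lt B \<and> (induced_order lt B, r) \<in> ordIso) \<and>
     (\<forall>t\<in>T. (card_of (imm_succ T lt t), r) \<in> ordLeq) \<and>
     (card_of T, l) \<in> ordLeq \<and>
     (\<forall>C. chain_in T lt C \<and> C \<noteq> {} \<longrightarrow> (\<exists>s. is_sup T lt C s)) \<and>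
     (\<forall>t\<in>T. \<not> leaf T lt t \<longrightarrow> L t = Cup \<or> L t = Cap) \<and>
     (\<forall>t\<in>T. leaf T lt t \<longrightarrow> (\<exists>U. L t = Leaf U \<and> U \<in> basic_open r))"

text \<open>Since the history of a play is determined by the current node of the tree
(it is the set of its predecessors), a strategy of player II is a function
assigning to every node labelled Cup one of its immediate successors.
A play ending at the leaf t is consistent with sigma iff at every Cup-node s
below t the move sigma s lies on the path to t.\<close>

definition strategy_II ::
  "'n set \<Rightarrow> ('n \<Rightarrow> 'n \<Rightarrow> bool) \<Rightarrow> ('n \<Rightarrow> 'a label) \<Rightarrow> ('n \<Rightarrow> 'n) \<Rightarrow> bool" where
  "strategy_II T lt L \<sigma> \<longleftrightarrow> (\<forall>s\<in>T. L s = Cup \<longrightarrow> \<sigma> s \<in> imm_succ T lt s)"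

definition consistent_II ::
  "'n set \<Rightarrow> ('n \<Rightarrow> 'n \<Rightarrow> bool) \<Rightarrow> ('n \<Rightarrow> 'a label) \<Rightarrow> ('n \<Rightarrow> 'n) \<Rightarrow> 'n \<Rightarrow> bool" where
  "consistent_II T lt L \<sigma> t \<longleftrightarrow>
     (\<forall>s\<in>T. lt s t \<and> L s = Cup \<longrightarrow> lt (\<sigma> s) t \<or> \<sigma> s = t)"

definition label_set :: "'a label \<Rightarrow> 'a set" where
  "label_set x = (case x of Leaf U \<Rightarrow> U | _ \<Rightarrow> {})"

definition winning_II ::
  "'n set \<Rightarrow> ('n \<Rightarrow> 'n \<Rightarrow> bool) \<Rightarrow> ('n \<Rightarrow> 'a label) \<Rightarrow> 'a \<Rightarrow> ('n \<Rightarrow> 'n) \<Rightarrow> bool" where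
  "winning_II T lt L \<xi> \<sigma> \<longleftrightarrow> strategy_II T lt L \<sigma> \<and>
     (\<forall>t. leaf T lt t \<and> consistent_II T lt L \<sigma> t \<longrightarrow> \<xi> \<in> label_set (L t))"

definition borel_star_code ::
  "'k rel \<Rightarrow> 'l rel \<Rightarrow> 'n set \<Rightarrow> ('n \<Rightarrow> 'n \<Rightarrow> bool) \<Rightarrow> ('n \<Rightarrow> ('k \<Rightarrow> 'k) label) \<Rightarrow> bool" where
  "borel_star_code r l T lt L \<longleftrightarrow>
     good_labelled_tree r l T lt L \<and>
     (\<exists>(D :: ('k \<Rightarrow> 'k) set) (\<pi> :: ('k \<Rightarrow> 'k) \<Rightarrow> ('n \<Rightarrow> 'n)).
        kclosed r (basic_open r) D \<and>
        (\<forall>\<eta>\<in>D. strategy_II T lt L (\<pi> \<eta>)) \<and>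
        (\<forall>\<xi>. (\<exists>\<sigma>. winning_II T lt L \<xi> \<sigma>) \<longrightarrow> (\<exists>\<eta>\<in>D. winning_II T lt L \<xi> (\<pi> \<eta>))) \<and>
        {(\<xi>, \<eta>). \<eta> \<in> D \<and> winning_II T lt L \<xi> (\<pi> \<eta>)} \<in> kborel r (basic_open2 r))"

end

theory Submission imports Defs begin
unbundle cardinal_syntax

lemma fin_less:
  assumes "Cinfinite r" "finite A" shows "|A| <o r"
proof -
  have "|A| <o |Field r|"
    using assms by (intro finite_ordLess_infinite card_of_Well_order) (auto simp: cinfinite_def Field_card_of)
  moreover have "|Field r| =o r" using assms(1) by (intro card_of_Field_ordIso) simp
  ultimately show ?thesis by (rule ordLess_ordIso_trans)
qed

lemma univ_leq:
  fixes r :: "'k rel"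
  assumes "Card_order r" "Field r = UNIV" shows "|A::'k set| \<le>o r"
proof -
  have "|A| \<le>o |Field r|" using assms(2) card_of_mono1[of A UNIV] by (metis subset_UNIV)
  moreover have "|Field r| =o r" using assms(1) by (rule card_of_Field_ordIso)
  ultimately show ?thesis by (rule ordLeq_ordIso_trans)
qed

lemma kb_un2:
  assumes "Cinfinite r" "A \<in> kborel r B" "C \<in> kborel r B"
  shows "A \<union> C \<in> kborel r B"
proof -
  have "|{A,C}| \<le>o r" by (rule ordLess_imp_ordLeq, rule fin_less[OF assms(1)]) simp
  hence "\<Union>{A,C} \<in> kborel r B" using assms by (intro kborel.union) auto
  thus ?thesis by simp
qed

lemma univ_basic:
  assumes "Cinfinite r" shows "UNIV \<in> basic_open r"
proof -
  have "Nbhd Map.empty = UNIV" by (simp add: Nbhd_def)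
  moreover have "|dom (Map.empty :: 'k \<Rightarrow> 'k option)| <o r" using fin_less[OF assms, of "{}"] by simp
  ultimately show ?thesis unfolding basic_open_def by blast
qed

lemma cyl_borel:
  assumes "Card_order r" "Field r = UNIV" "Cinfinite r"
  shows "(UNIV :: ('k\<Rightarrow>'k) set) \<times> {\<eta>::'k\<Rightarrow>'k. P (\<eta> c)} \<in> kborel r (basic_open2 r)"
proof -
  define g where "g v = (UNIV :: ('k\<Rightarrow>'k) set) \<times> Nbhd (Map.empty(c \<mapsto> v))" for v :: 'k
  have eq: "UNIV \<times> {\<eta>::'k\<Rightarrow>'k. P (\<eta> c)} = \<Union>(g ` {v. P v})"
    by (auto simp: g_def Nbhd_def)
  have "|g ` {v. P v}| \<le>o r"
    by (rule ordLeq_transitive[OF card_of_image univ_leq[OF assms(1,2)]])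
  moreover have "g v \<in> basic_open2 r" for v
  proof -
    have "|dom (Map.empty(c \<mapsto> v))| <o r" using fin_less[OF assms(3), of "{c}"] by simp
    hence "Nbhd (Map.empty(c \<mapsto> v)) \<in> basic_open r" unfolding basic_open_def by blast
    thus ?thesis unfolding g_def basic_open2_def using univ_basic[OF assms(3)] by blast
  qed
  ultimately have "\<Union>(g ` {v. P v}) \<in> kborel r (basic_open2 r)"
    by (intro kborel.union) (auto intro: kborel.basic)
  thus ?thesis using eq by simp
qed

lemma winning_cong:
  assumes "\<forall>s\<in>T. L s = Cup \<longrightarrow> \<sigma> s = \<sigma>' s"
  shows "winning_II T lt L \<xi> \<sigma> = winning_II T lt L \<xi> \<sigma>'"
  using assms unfolding winning_II_def strategy_II_def consistent_II_def by auto

theorem lemma3p4: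
  fixes r :: "'k rel" and l :: "'l rel"
    and T :: "'n set" and lt :: "'n \<Rightarrow> 'n \<Rightarrow> bool" and L :: "'n \<Rightarrow> ('k \<Rightarrow> 'k) label"
  assumes "Card_order r" and "Field r = UNIV" and "Cinfinite r" and "regularCard r"
    and "Card_order l" and "(l, r) \<in> ordLeq"
    and "good_labelled_tree r l T lt L"
  shows "borel_star_code r l T lt L"
proof -
  have g: "good_labelled_tree r l T lt L" by fact
  have rU: "r \<le>o |UNIV :: 'k set|"
  proof -
    have "|Field r| =o r" by (rule card_of_Field_ordIso[OF assms(1)])
    hence "r =o |Field r|" by (rule ordIso_symmetric)
    hence "r \<le>o |Field r|" by (rule ordIso_imp_ordLeq)
    thus ?thesis using assms(2) by simp
  qed
  have "|T| \<le>o l" using g unfolding good_labelled_tree_def by (elim conjE)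
  hence Tr: "|T| \<le>o r" using assms(6) by (rule ordLeq_transitive)
  have subT: "|h ` S| \<le>o r" if "S \<subseteq> T" for S and h :: "'n \<Rightarrow> 'z"
    by (rule ordLeq_transitive[OF card_of_image ordLeq_transitive[OF card_of_mono1[OF that] Tr]])
  obtain code :: "'n \<Rightarrow> 'k" where code: "inj_on code T"
  proof -
    have "|T| \<le>o |UNIV :: 'k set|" by (rule ordLeq_transitive[OF Tr rU])
    thus ?thesis using card_of_ordLeq[of T "UNIV :: 'k set"] that by blast
  qed
  define f where "f s = (SOME h :: 'k \<Rightarrow> 'n. range h = imm_succ T lt s)" for s
  have fs: "range (f s) = imm_succ T lt s" if "s \<in> T" "L s = Cup" for s
  proof -
    have lv: "\<forall>t\<in>T. leaf T lt t \<longrightarrow> (\<exists>U. L t = Leaf U \<and> U \<in> basic_open r)"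
      using g unfolding good_labelled_tree_def by (elim conjE)
    have "\<not> leaf T lt s" using lv that by auto
    hence ne: "imm_succ T lt s \<noteq> {}" using that unfolding leaf_def by blast
    have "|imm_succ T lt s| \<le>o r"
    proof -
      have "\<forall>t\<in>T. |imm_succ T lt t| \<le>o r" using g unfolding good_labelled_tree_def by (elim conjE)
      thus ?thesis using that by blast
    qed
    hence "|imm_succ T lt s| \<le>o |UNIV :: 'k set|"
      by (rule ordLeq_transitive[OF _ rU])
    then obtain h :: "'k \<Rightarrow> 'n" where "range h = imm_succ T lt s"
      using card_of_ordLeq2[OF ne, of "UNIV :: 'k set"] by (elim iffD2[THEN exE]) 
    thus ?thesis unfolding f_def by (rule someI[where P="\<lambda>h. range h = imm_succ T lt s"])
  qed
  define \<pi> where "\<pi> \<eta> s = f s (\<eta> (code s))" for \<eta> :: "'k \<Rightarrow> 'k" and s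
  have strat: "strategy_II T lt L (\<pi> \<eta>)" for \<eta>
    unfolding strategy_II_def \<pi>_def using fs by blast
  have surj: "\<exists>\<eta>. \<forall>s\<in>T. L s = Cup \<longrightarrow> \<pi> \<eta> s = \<sigma> s" if "strategy_II T lt L \<sigma>" for \<sigma>
  proof -
    define \<eta> where "\<eta> k = (SOME v. f (inv_into T code k) v = \<sigma> (inv_into T code k))" for k
    have "\<pi> \<eta> s = \<sigma> s" if "s \<in> T" "L s = Cup" for s
    proof -
      have iv: "inv_into T code (code s) = s" using code that by simp
      have "\<sigma> s \<in> range (f s)" using fs[OF that] \<open>strategy_II T lt L \<sigma>\<close> that
        unfolding strategy_II_def by blast
      then obtain v where "f s v = \<sigma> s" by auto
      thus ?thesis unfolding \<pi>_def \<eta>_def iv by (rule someI[where P="\<lambda>v. f s v = \<sigma> s"])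
    qed
    thus ?thesis by blast
  qed
  define S where "S t = {s\<in>T. lt s t \<and> L s = Cup}" for t
  define H where "H t s = (UNIV :: ('k\<Rightarrow>'k) set) \<times> {\<eta>. lt (f s (\<eta> (code s))) t \<or> f s (\<eta> (code s)) = t}" for t s
  define G where "G t = - \<Inter>(H t ` S t) \<union> (label_set (L t) \<times> UNIV)" for t
  have cons: "consistent_II T lt L (\<pi> \<eta>) t \<longleftrightarrow> (\<forall>s\<in>S t. (\<xi>, \<eta>) \<in> H t s)" for \<xi> \<eta> t
    unfolding consistent_II_def S_def H_def \<pi>_def by blast
  have Weq: "{(\<xi>, \<eta>). \<eta> \<in> UNIV \<and> winning_II T lt L \<xi> (\<pi> \<eta>)} = \<Inter>(G ` {t. leaf T lt t})"
  proof (rule set_eqI)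
    fix p :: "('k\<Rightarrow>'k) \<times> ('k\<Rightarrow>'k)"
    obtain \<xi> \<eta> where p: "p = (\<xi>, \<eta>)" by (cases p)
    have c2: "consistent_II T lt L (\<pi> \<eta>) t \<longleftrightarrow> (\<forall>s\<in>S t. (\<xi>, \<eta>) \<in> H t s)" for t
      by (rule cons)
    have mG: "(\<xi>, \<eta>) \<in> G t \<longleftrightarrow> \<not> (\<forall>s\<in>S t. (\<xi>, \<eta>) \<in> H t s) \<or> \<xi> \<in> label_set (L t)" for t
      unfolding G_def by simp
    have "p \<in> {(\<xi>, \<eta>). \<eta> \<in> UNIV \<and> winning_II T lt L \<xi> (\<pi> \<eta>)} \<longleftrightarrow> winning_II T lt L \<xi> (\<pi> \<eta>)"
      unfolding p by simp
    also have "\<dots> \<longleftrightarrow> (\<forall>t. leaf T lt t \<and> consistent_II T lt L (\<pi> \<eta>) t \<longrightarrow> \<xi> \<in> label_set (L t))"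
      unfolding winning_II_def using strat[of \<eta>] by blast
    also have "\<dots> \<longleftrightarrow> (\<forall>t. leaf T lt t \<longrightarrow> (\<xi>, \<eta>) \<in> G t)"
      unfolding mG c2 by blast
    also have "\<dots> \<longleftrightarrow> p \<in> \<Inter>(G ` {t. leaf T lt t})" unfolding p by blast
    finally show "p \<in> {(\<xi>, \<eta>). \<eta> \<in> UNIV \<and> winning_II T lt L \<xi> (\<pi> \<eta>)} \<longleftrightarrow> p \<in> \<Inter>(G ` {t. leaf T lt t})" .
  qed
  have Gb: "G t \<in> kborel r (basic_open2 r)" if lf: "leaf T lt t" for t
  proof -
    have "H t s \<in> kborel r (basic_open2 r)" for s
      unfolding H_def by (rule cyl_borel[OF assms(1-3)])
    moreover have "|H t ` S t| \<le>o r" by (rule subT) (auto simp: S_def)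
    ultimately have "\<Inter>(H t ` S t) \<in> kborel r (basic_open2 r)"
      by (intro kborel.inter) auto
    hence 1: "- \<Inter>(H t ` S t) \<in> kborel r (basic_open2 r)" by (rule kborel.compl)
    have lv: "\<forall>t\<in>T. leaf T lt t \<longrightarrow> (\<exists>U. L t = Leaf U \<and> U \<in> basic_open r)"
      using g unfolding good_labelled_tree_def by (elim conjE)
    have "t \<in> T" using lf unfolding leaf_def by (elim conjE)
    then obtain U where "L t = Leaf U" "U \<in> basic_open r"
      using lv lf by blast
    hence "label_set (L t) \<times> UNIV \<in> basic_open2 r"
      unfolding basic_open2_def label_set_def using univ_basic[OF assms(3)] by auto
    hence 2: "label_set (L t) \<times> UNIV \<in> kborel r (basic_open2 r)" by (rule kborel.basic)
    show ?thesis unfolding G_def using kb_un2[OF assms(3) 1 2] .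
  qed
  have "|G ` {t. leaf T lt t}| \<le>o r" by (rule subT) (auto simp: leaf_def)
  hence Wb: "\<Inter>(G ` {t. leaf T lt t}) \<in> kborel r (basic_open2 r)"
    using Gb by (intro kborel.inter) auto
  have closed: "kclosed r (basic_open r) (UNIV :: ('k\<Rightarrow>'k) set)"
    unfolding kclosed_def kopen_def
    by (rule exI[of _ "{}"]) (simp add: card_of_empty1 assms(1))
  show ?thesis unfolding borel_star_code_def
  proof (intro conjI exI[of _ UNIV] exI[of _ \<pi>])
    show "good_labelled_tree r l T lt L" by fact
    show "kclosed r (basic_open r) UNIV" by (rule closed)
    show "\<forall>\<eta>\<in>UNIV. strategy_II T lt L (\<pi> \<eta>)" using strat by blast
    show "\<forall>\<xi>. (\<exists>\<sigma>. winning_II T lt L \<xi> \<sigma>) \<longrightarrow> (\<exists>\<eta>\<in>UNIV. winning_II T lt L \<xi> (\<pi> \<eta>))"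
    proof (intro allI impI)
      fix \<xi> assume "\<exists>\<sigma>. winning_II T lt L \<xi> \<sigma>"
      then obtain \<sigma> where w: "winning_II T lt L \<xi> \<sigma>" by blast
      then obtain \<eta> where "\<forall>s\<in>T. L s = Cup \<longrightarrow> \<pi> \<eta> s = \<sigma> s"
        using surj unfolding winning_II_def by blast
      hence "winning_II T lt L \<xi> (\<pi> \<eta>)" using w winning_cong by metis
      thus "\<exists>\<eta>\<in>UNIV. winning_II T lt L \<xi> (\<pi> \<eta>)" by blast
    qed
    show "{(\<xi>, \<eta>). \<eta> \<in> UNIV \<and> winning_II T lt L \<xi> (\<pi> \<eta>)} \<in> kborel r (basic_open2 r)"
      using Wb Weq by simp
  qed
qed

end
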